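(* The criterion $\Phi(g)=\frac12\sum_{k=0}^{S+1}(g(k)-\mathbb W(k))^2$ admits a unique minimizer $\hat g$ over $\mathcal C(\mathcal K)$. Moreover, an element $\hat g\in\mathcal C(\mathcal K)$ is this minimizer if and only if the process $\widehat{\mathbb H}$ defined on $\{0,\dots,S+2\}$ by $\widehat{\mathbb H}(0)=0$ and $\widehat{\mathbb H}(x)=\sum_{k=0}^{x-1}\sum_{j=0}^k\hat g(j)$ for $x\in\{1,\dots,S+2\}$ satisfies $\widehat{\mathbb H}(x)\ge\mathbb H(x)$ for all $x\in\{0,\dots,S+2\}$, with equality $\widehat{\mathbb H}(x)=\mathbb H(x)$ whenever $x\in\{s_0,s_1,\dots,s_{m+1},S+2\}$ or $x$ is a knot of $\hat g$ lying in $\{s_j+1,\dots,s_{j+1}-1\}$ for some $j\in\{0,\dots,m\}$.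
   Context: Let $p_0$ be a convex probability mass function on $\mathbb N=\{0,1,\dots\}$ with support $\{0,\dots,S\}$, $S\ge1$ an integer (convex means $\Delta p_0(k)=p_0(k+1)-2p_0(k)+p_0(k-1)\ge0$ for all $k\ge1$). A knot of a sequence (or finite vector) $p$ is an integer $k\ge1$ (in the index range where $\Delta p(k)$ is defined) with $\Delta p(k)>0$; note $S+1$ is a knot of $p_0$. Let $F_{p_0}(k)=\sum_{j=0}^kp_0(j)$, $F_{p_0}(-1)=0$. Let $\mathbb U$ be a standard Brownian bridge on $[0,1]$, define $\mathbb W(k)=\mathbb U(F_{p_0}(k))-\mathbb U(F_{p_0}(k-1))$ for $k\in\{0,\dots,S+1\}$ (so $\mathbb W(S+1)=0$), and $\mathbb H(0)=0$, $\mathbb H(z)=\sum_{k=0}^{z-1}\mathbb U(F_{p_0}(k))$ for $z\ge1$. Let $s_1<\dots<s_m$ be the knots of $p_0$ lying in $\{1,\dots,S\}$ (the interior knots; possibly $m=0$), and put $s_0=0$, $s_{m+1}=S+1$, $\mathcal K=\{s_1,\dots,s_m\}$. A vector $g=(g(0),\dots,g(S+1))$ is convex on $\{a,\dots,b\}$ if $g(k+1)-2g(k)+g(k-1)\ge0$ for all $a<k<b$. $\mathcal C(\mathcal K)$ is the set of $g\in\mathbb R^{S+2}$ that are convex on $\{s_j,\dots,s_{j+1}\}$ for every $j=0,\dots,m$. The statement holds for every realization of $\mathbb U$. *)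

theory Defs
  imports "HOL-Analysis.Analysis"
begin

text \<open>Second difference of a sequence (for k \<ge> 1).\<close>
definition D2 :: "(nat \<Rightarrow> real) \<Rightarrow> nat \<Rightarrow> real" where
  "D2 p k = p (k + 1) - 2 * p k + p (k - 1)"

definition convex_pmf_support :: "(nat \<Rightarrow> real) \<Rightarrow> nat \<Rightarrow> bool" where
  "convex_pmf_support p S \<longleftrightarrow>
     (\<forall>k. 0 \<le> p k) \<and> (\<Sum>k\<le>S. p k) = 1 \<and>
     (\<forall>k\<le>S. 0 < p k) \<and> (\<forall>k>S. p k = 0) \<and>
     (\<forall>k\<ge>1. 0 \<le> D2 p k)"

definition interior_knots :: "(nat \<Rightarrow> real) \<Rightarrow> nat \<Rightarrow> nat set" where
  "interior_knots p S = {k. 1 \<le> k \<and> k \<le> S \<and> 0 < D2 p k}"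

text \<open>The sequence s_0 = 0 < s_1 < ... < s_m < s_{m+1} = S+1.\<close>
definition knot_seq :: "(nat \<Rightarrow> real) \<Rightarrow> nat \<Rightarrow> nat list" where
  "knot_seq p S = sorted_list_of_set ({0, S + 1} \<union> interior_knots p S)"

definition convex_on_range :: "(nat \<Rightarrow> real) \<Rightarrow> nat \<Rightarrow> nat \<Rightarrow> bool" where
  "convex_on_range g a b \<longleftrightarrow> (\<forall>k. a < k \<and> k < b \<longrightarrow> 0 \<le> D2 g k)"

text \<open>C(K): vectors (g(0),...,g(S+1)), represented as functions vanishing beyond S+1,
  convex on each {s_j,...,s_{j+1}}.\<close>
definition CK :: "(nat \<Rightarrow> real) \<Rightarrow> nat \<Rightarrow> (nat \<Rightarrow> real) set" where
  "CK p S = {g. (\<forall>k>S+1. g k = 0) \<and>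
     (let s = knot_seq p S in
        \<forall>j < length s - 1. convex_on_range g (s ! j) (s ! (j + 1)))}"

definition cdf :: "(nat \<Rightarrow> real) \<Rightarrow> nat \<Rightarrow> real" where
  "cdf p k = (\<Sum>j\<le>k. p j)"

definition Wproc :: "(real \<Rightarrow> real) \<Rightarrow> (nat \<Rightarrow> real) \<Rightarrow> nat \<Rightarrow> real" where
  "Wproc U p k = U (cdf p k) - (if k = 0 then U 0 else U (cdf p (k - 1)))"

definition Hproc :: "(real \<Rightarrow> real) \<Rightarrow> (nat \<Rightarrow> real) \<Rightarrow> nat \<Rightarrow> real" where
  "Hproc U p z = (\<Sum>k<z. U (cdf p k))"

definition Hhat :: "(nat \<Rightarrow> real) \<Rightarrow> nat \<Rightarrow> real" where
  "Hhat g x = (\<Sum>k<x. \<Sum>j\<le>k. g j)"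

definition Phi :: "(real \<Rightarrow> real) \<Rightarrow> (nat \<Rightarrow> real) \<Rightarrow> nat \<Rightarrow> (nat \<Rightarrow> real) \<Rightarrow> real" where
  "Phi U p S g = (1/2) * (\<Sum>k\<le>S+1. (g k - Wproc U p k)^2)"

definition vec_knot :: "(nat \<Rightarrow> real) \<Rightarrow> nat \<Rightarrow> nat \<Rightarrow> bool" where
  "vec_knot g S k \<longleftrightarrow> 1 \<le> k \<and> k \<le> S \<and> 0 < D2 g k"

end

theory Submission
  imports Defs "HOL-Analysis.Analysis"
begin


definition DD :: "(nat \<Rightarrow> real) \<Rightarrow> nat \<Rightarrow> real" where
  "DD d x = (\<Sum>k<x. \<Sum>j\<le>k. d j)"

lemma DD_step: "DD d (Suc (Suc n)) = 2 * DD d (Suc n) - DD d n + d (Suc n)"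
  by (simp add: DD_def lessThan_Suc atMost_Suc)

lemma sbp:
  assumes "1 \<le> n"
  shows "(\<Sum>k\<le>n. d k * h k) = (\<Sum>x\<in>{1..<n}. DD d x * D2 h x)
     + DD d n * (h (n-1) - 2*h n) + DD d (Suc n) * h n"
  using assms
proof (induction n rule: nat_induct_at_least)
  case base
  then show ?case by (simp add: DD_def atMost_Suc lessThan_Suc algebra_simps)
next
  case (Suc n)
  have s: "{1..<Suc n} = insert n {1..<n}" using Suc.hyps by auto
  have "(\<Sum>k\<le>Suc n. d k * h k) = (\<Sum>k\<le>n. d k * h k) + d (Suc n) * h (Suc n)" by simp
  also have "\<dots> = (\<Sum>x\<in>{1..<n}. DD d x * D2 h x)
     + DD d n * (h (n-1) - 2*h n) + DD d (Suc n) * h n + d (Suc n) * h (Suc n)"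
    using Suc.IH by simp
  also have "\<dots> = (\<Sum>x\<in>{1..<Suc n}. DD d x * D2 h x)
     + DD d (Suc n) * (h (Suc n-1) - 2*h (Suc n)) + DD d (Suc (Suc n)) * h (Suc n)"
    using Suc.hyps by (simp add: s DD_step D2_def algebra_simps)
  finally show ?case .
qed

lemma first_order:
  fixes a b :: real
  assumes "\<And>t. 0 < t \<Longrightarrow> t \<le> 1 \<Longrightarrow> 0 \<le> t*a + t^2*b" "0 \<le> b"
  shows "0 \<le> a"
proof (rule ccontr)
  assume "\<not> 0 \<le> a"
  hence a: "a < 0" by simp
  define t where "t = min 1 (-a/(2*(b+1)))"
  have "0 < -a/(2*(b+1))" using a assms(2) by (intro divide_pos_pos) auto
  hence t0: "0 < t" by (simp add: t_def)
  have t1: "t \<le> 1" by (simp add: t_def)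
  have "t \<le> -a/(2*(b+1))" by (simp add: t_def)
  hence "t * (2*(b+1)) \<le> (-a/(2*(b+1))) * (2*(b+1))" using assms(2) by (intro mult_right_mono) auto
  also have "\<dots> = -a" using assms(2) by simp
  finally have "t * (2*(b+1)) \<le> -a" .
  moreover have "t * (2*(b+1)) = 2*(t*b) + 2*t" by (simp add: algebra_simps)
  ultimately have "t*b \<le> -a/2" using t0 by linarith
  hence "a + t*b < 0" using a by linarith
  hence "t * (a + t*b) < 0" using t0 by (simp add: mult_pos_neg)
  moreover have "t * (a + t*b) = t*a + t^2*b" by (simp add: power2_eq_square algebra_simps)
  ultimately show False using assms(1)[OF t0 t1] by linarith
qed

lemma list_gap:
  fixes xs :: "nat list"
  shows "xs \<noteq> [] \<Longrightarrow> hd xs < k \<Longrightarrow> k < last xs \<Longrightarrow> k \<notin> set xs \<Longrightarrow>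
    \<exists>j<length xs - 1. xs!j < k \<and> k < xs!(j+1)"
proof (induction xs)
  case Nil then show ?case by simp
next
  case (Cons a ys)
  then have ys: "ys \<noteq> []" by auto
  show ?case
  proof (cases "k < hd ys")
    case True
    then show ?thesis using ys Cons.prems by (intro exI[of _ 0]) (auto simp: hd_conv_nth)
  next
    case False
    then have "hd ys < k" using Cons.prems ys by (metis hd_in_set linorder_neqE_nat list.set_intros(2))
    then obtain j where "j<length ys - 1" "ys!j < k \<and> k < ys!(j+1)"
      using Cons.IH ys Cons.prems by auto
    then show ?thesis by (intro exI[of _ "Suc j"]) auto
  qed
qed




locale cvx =
  fixes S :: nat and P :: "nat set" and W :: "nat \<Rightarrow> real"
  assumes SP: "Suc S \<in> P"
begin

definition C where
  "C = {g. (\<forall>k>Suc S. g k = 0) \<and> (\<forall>x. 1 \<le> x \<and> x \<le> S \<and> x \<notin> P \<longrightarrow> 0 \<le> D2 g x)}"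
definition F where "F g = 1/2 * (\<Sum>k\<le>Suc S. (g k - W k)^2)"
definition ip :: "(nat \<Rightarrow> real) \<Rightarrow> (nat \<Rightarrow> real) \<Rightarrow> real" where "ip d h = (\<Sum>k\<le>Suc S. d k * h k)"

lemma F_diff: "F h - F g = ip (\<lambda>k. g k - W k) h - ip (\<lambda>k. g k - W k) g
   + 1/2 * (\<Sum>k\<le>Suc S. (h k - g k)^2)"
proof -
  have "F h - F g = (\<Sum>k\<le>Suc S. (h k - W k)^2/2 - (g k - W k)^2/2)"
    by (simp add: F_def sum_subtractf sum_divide_distrib del: sum.atMost_Suc)
  also have "\<dots> = (\<Sum>k\<le>Suc S. (g k - W k) * h k - (g k - W k) * g k + 1/2 * (h k - g k)^2)"
    by (rule sum.cong) (auto simp: power2_eq_square field_simps)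
  also have "\<dots> = ip (\<lambda>k. g k - W k) h - ip (\<lambda>k. g k - W k) g
   + 1/2 * (\<Sum>k\<le>Suc S. (h k - g k)^2)"
    by (simp add: ip_def sum.distrib sum_subtractf sum_distrib_left del: sum.atMost_Suc)
  finally show ?thesis .
qed

lemma ip_lin: "ip d (\<lambda>k. g k + t * e k) = ip d g + t * ip d e"
proof -
  have "(\<Sum>k\<le>Suc S. d k * (g k + t * e k)) = (\<Sum>k\<le>Suc S. d k * g k + t * (d k * e k))"
    by (rule sum.cong) (auto simp: algebra_simps)
  also have "\<dots> = (\<Sum>k\<le>Suc S. d k * g k) + t * (\<Sum>k\<le>Suc S. d k * e k)"
    by (simp only: sum.distrib sum_distrib_left)
  finally show ?thesis unfolding ip_def .
qed

lemma ip_sbp: "ip d h = (\<Sum>x\<in>{1..<Suc S}. DD d x * D2 h x)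
     + DD d (Suc S) * (h S - 2*h (Suc S)) + DD d (Suc (Suc S)) * h (Suc S)"
  unfolding ip_def using sbp[of "Suc S" d h] by simp

lemma D2_lin: "D2 (\<lambda>k. g k + t * e k) x = D2 g x + t * D2 e x"
  by (simp add: D2_def algebra_simps)

lemma C_add: "g \<in> C \<Longrightarrow> e \<in> C \<Longrightarrow> 0 \<le> t \<Longrightarrow> (\<lambda>k. g k + t * e k) \<in> C"
  unfolding C_def by (auto simp: D2_lin)

lemma C_scale: "g \<in> C \<Longrightarrow> 0 \<le> c \<Longrightarrow> (\<lambda>k. c * g k) \<in> C"
proof -
  have "D2 (\<lambda>k. c * g k) x = c * D2 g x" for x by (simp add: D2_def algebra_simps)
  thus "g \<in> C \<Longrightarrow> 0 \<le> c \<Longrightarrow> (\<lambda>k. c * g k) \<in> C" unfolding C_def by auto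
qed

lemma dir:
  assumes g: "g \<in> C" and min: "\<forall>h\<in>C. F g \<le> F h"
    and e: "\<And>t. 0 < t \<Longrightarrow> t \<le> 1 \<Longrightarrow> (\<lambda>k. g k + t * e k) \<in> C"
  shows "0 \<le> ip (\<lambda>k. g k - W k) e"
proof (rule first_order)
  show "0 \<le> 1/2 * (\<Sum>k\<le>Suc S. (e k)^2)" by (simp add: sum_nonneg)
  fix t :: real assume t: "0 < t" "t \<le> 1"
  have "0 \<le> F (\<lambda>k. g k + t * e k) - F g" using min e[OF t] by simp
  also have "\<dots> = t * ip (\<lambda>k. g k - W k) e + t^2 * (1/2 * (\<Sum>k\<le>Suc S. (e k)^2))"
    by (simp add: F_diff ip_lin power_mult_distrib sum_distrib_left algebra_simps)
  finally show "0 \<le> t * ip (\<lambda>k. g k - W k) e + t^2 * (1/2 * (\<Sum>k\<le>Suc S. (e k)^2))" .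
qed

lemma nec1:
  assumes g: "g \<in> C" and min: "\<forall>h\<in>C. F g \<le> F h" and e: "e \<in> C"
  shows "0 \<le> ip (\<lambda>k. g k - W k) e"
  using dir[OF g min] C_add[OF g e] by auto

lemma nec2:
  assumes g: "g \<in> C" and min: "\<forall>h\<in>C. F g \<le> F h"
  shows "ip (\<lambda>k. g k - W k) g = 0"
proof -
  have "0 \<le> ip (\<lambda>k. g k - W k) g" using nec1[OF g min g] .
  moreover have "0 \<le> ip (\<lambda>k. g k - W k) (\<lambda>k. - g k)"
  proof (rule dir[OF g min])
    fix t :: real assume "0 < t" "t \<le> 1"
    have "(\<lambda>k. (1 - t) * g k) \<in> C" using C_scale[OF g] \<open>t \<le> 1\<close> by simp
    moreover have "(\<lambda>k. g k + t * - g k) = (\<lambda>k. (1 - t) * g k)" by (auto simp: algebra_simps)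
    ultimately show "(\<lambda>k. g k + t * - g k) \<in> C" by simp
  qed
  moreover have "ip (\<lambda>k. g k - W k) (\<lambda>k. - g k) = - ip (\<lambda>k. g k - W k) g"
    by (simp add: ip_def sum_negf)
  ultimately show ?thesis by linarith
qed

lemma ip_terms:
  assumes "\<And>x. x \<in> {1..<Suc S} \<Longrightarrow> 0 \<le> DD d x * D2 h x"
    and "DD d (Suc S) = 0" "DD d (Suc (Suc S)) = 0"
  shows "0 \<le> ip d h"
proof -
  have "0 \<le> (\<Sum>x\<in>{1..<Suc S}. DD d x * D2 h x)" by (rule sum_nonneg) (use assms(1) in blast)
  thus ?thesis by (simp only: ip_sbp assms(2,3) mult_zero_left add_0_right)
qed

lemma suff:
  assumes g: "g \<in> C"
    and pos: "\<forall>x\<le>S+2. 0 \<le> DD (\<lambda>k. g k - W k) x"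
    and eq: "\<forall>x\<le>S+2. (x \<in> P \<or> x = S+2 \<or> (1 \<le> x \<and> x \<le> S \<and> 0 < D2 g x \<and> x \<notin> P))
             \<longrightarrow> DD (\<lambda>k. g k - W k) x = 0"
  shows "\<forall>h\<in>C. F g \<le> F h"
proof
  fix h assume h: "h \<in> C"
  let ?d = "\<lambda>k. g k - W k"
  have b1: "DD ?d (Suc S) = 0" using eq SP by auto
  have b2: "DD ?d (Suc (Suc S)) = 0" using eq by auto
  have "0 \<le> ip ?d h"
  proof (rule ip_terms[OF _ b1 b2])
    fix x assume x: "x \<in> {1..<Suc S}"
    show "0 \<le> DD ?d x * D2 h x"
    proof (cases "x \<in> P")
      case True then show ?thesis using eq x by auto
    next
      case False then show ?thesis using h x pos unfolding C_def by auto
    qed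
  qed
  moreover have "ip ?d g = 0"
  proof -
    have "ip ?d g = (\<Sum>x\<in>{1..<Suc S}. DD ?d x * D2 g x)" by (simp add: ip_sbp b1 b2)
    also have "\<dots> = 0"
    proof (rule sum.neutral, rule ballI)
      fix x assume x: "x \<in> {1..<Suc S}"
      show "DD ?d x * D2 g x = 0"
      proof (cases "x \<in> P")
        case True then show ?thesis using eq x by auto
      next
        case False
        then have "0 \<le> D2 g x" using g x unfolding C_def by auto
        then show ?thesis using eq x False by (cases "D2 g x = 0") auto
      qed
    qed
    finally show ?thesis .
  qed
  moreover have "0 \<le> 1/2 * (\<Sum>k\<le>Suc S. (h k - g k)^2)" by (simp add: sum_nonneg)
  ultimately show "F g \<le> F h" using F_diff[of h g] by linarith
qed

lemma C_lin:
  assumes "\<forall>k>Suc S. e k = 0" "\<And>x. 1 \<le> x \<Longrightarrow> x \<le> S \<Longrightarrow> D2 e x = 0"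
  shows "e \<in> C" "(\<lambda>k. - e k) \<in> C"
proof -
  have "D2 (\<lambda>k. - e k) x = - D2 e x" for x by (simp add: D2_def)
  then show "e \<in> C" "(\<lambda>k. - e k) \<in> C" using assms unfolding C_def by auto
qed

definition hinge :: "nat \<Rightarrow> nat \<Rightarrow> real" where
  "hinge x0 k = (if k \<le> Suc S \<and> x0 \<le> k then real k - real x0 else 0)"

lemma D2_hinge:
  assumes "1 \<le> x" "x \<le> S"
  shows "D2 (hinge x0) x = (if x = x0 then 1 else 0)"
proof -
  consider "x < x0" | "x = x0" | "x0 < x" by linarith
  then show ?thesis
  proof cases
    case 1 then show ?thesis using assms by (auto simp: D2_def hinge_def)
  next
    case 2 then show ?thesis using assms by (auto simp: D2_def hinge_def)
  next
    case 3 then show ?thesis using assms by (auto simp: D2_def hinge_def of_nat_diff)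
  qed
qed

lemma nec:
  assumes g: "g \<in> C" and min: "\<forall>h\<in>C. F g \<le> F h"
  shows "(\<forall>x\<le>S+2. 0 \<le> DD (\<lambda>k. g k - W k) x) \<and>
     (\<forall>x\<le>S+2. (x \<in> P \<or> x = S+2 \<or> (1 \<le> x \<and> x \<le> S \<and> 0 < D2 g x \<and> x \<notin> P))
             \<longrightarrow> DD (\<lambda>k. g k - W k) x = 0)"
proof -
  let ?d = "\<lambda>k. g k - W k"
  have zero: "ip ?d e = 0" if "\<forall>k>Suc S. e k = 0" "\<And>x. 1 \<le> x \<Longrightarrow> x \<le> S \<Longrightarrow> D2 e x = 0" for e
  proof -
    have "0 \<le> ip ?d e" using nec1[OF g min C_lin(1)[OF that]] .
    moreover have "0 \<le> ip ?d (\<lambda>k. - e k)" using nec1[OF g min C_lin(2)[OF that]] .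
    moreover have "ip ?d (\<lambda>k. - e k) = - ip ?d e" by (simp add: ip_def sum_negf)
    ultimately show ?thesis by linarith
  qed
  have sum0: "(\<Sum>x\<in>{1..<Suc S}. DD ?d x * D2 e x) = 0" if "\<And>x. 1 \<le> x \<Longrightarrow> x \<le> S \<Longrightarrow> D2 e x = 0" for e
    using that by (intro sum.neutral) auto
  define e1 :: "nat \<Rightarrow> real" where "e1 k = (if k \<le> Suc S then 1 else 0)" for k
  define e2 :: "nat \<Rightarrow> real" where "e2 k = (if k \<le> Suc S then real k else 0)" for k
  have D2e1: "D2 e1 x = 0" if "1 \<le> x" "x \<le> S" for x
  proof -
    have "e1 (x - 1) = 1" "e1 (x + 1) = 1" "e1 x = 1" using that by (auto simp: e1_def)
    thus ?thesis unfolding D2_def by simp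
  qed
  have D2e2: "D2 e2 x = 0" if "1 \<le> x" "x \<le> S" for x
  proof -
    have "e2 (x - 1) = real x - 1" "e2 (x + 1) = real x + 1" "e2 x = real x" using that by (auto simp: e2_def of_nat_diff)
    thus ?thesis unfolding D2_def by simp
  qed
  have "ip ?d e1 = 0" by (rule zero) (auto simp: e1_def D2e1)
  hence r1: "- DD ?d (Suc S) + DD ?d (Suc (Suc S)) = 0"
    by (simp only: ip_sbp sum0[OF D2e1]) (simp add: e1_def)
  have "ip ?d e2 = 0" by (rule zero) (auto simp: e2_def D2e2)
  hence r2: "DD ?d (Suc S) * (real S - 2 * (real S + 1)) + DD ?d (Suc (Suc S)) * (real S + 1) = 0"
    by (simp only: ip_sbp sum0[OF D2e2]) (simp add: e2_def algebra_simps)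
  have b2: "DD ?d (Suc (Suc S)) = DD ?d (Suc S)" using r1 by linarith
  have b1: "DD ?d (Suc S) = 0" using r2 unfolding b2 by (simp add: algebra_simps)
  have b2': "DD ?d (Suc (Suc S)) = 0" using b1 b2 by simp
  have iph: "ip ?d (hinge x0) = DD ?d x0" if "1 \<le> x0" "x0 \<le> S" for x0
  proof -
    have "ip ?d (hinge x0) = (\<Sum>x\<in>{1..<Suc S}. DD ?d x * D2 (hinge x0) x)"
      by (simp add: ip_sbp b1 b2')
    also have "\<dots> = (\<Sum>x\<in>{1..<Suc S}. if x = x0 then DD ?d x else 0)"
      by (rule sum.cong) (auto simp: D2_hinge)
    also have "\<dots> = DD ?d x0" using that by (simp add: sum.delta)
    finally show ?thesis .
  qed
  have hC: "hinge x0 \<in> C" if "1 \<le> x0" "x0 \<le> S" for x0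
    unfolding C_def by (auto simp: D2_hinge hinge_def)
  have hC': "(\<lambda>k. - hinge x0 k) \<in> C" if "1 \<le> x0" "x0 \<le> S" "x0 \<in> P" for x0
  proof -
    have "D2 (\<lambda>k. - hinge x0 k) x = - D2 (hinge x0) x" for x by (simp add: D2_def)
    then show ?thesis unfolding C_def using that by (auto simp: D2_hinge hinge_def)
  qed
  have posi: "0 \<le> DD ?d x0" if "1 \<le> x0" "x0 \<le> S" for x0
    using nec1[OF g min hC[OF that]] iph[OF that] by simp
  have knot0: "DD ?d x0 = 0" if "1 \<le> x0" "x0 \<le> S" "x0 \<in> P" for x0
  proof -
    have "0 \<le> ip ?d (\<lambda>k. - hinge x0 k)" using nec1[OF g min hC'[OF that]] .
    moreover have "ip ?d (\<lambda>k. - hinge x0 k) = - ip ?d (hinge x0)" by (simp add: ip_def sum_negf)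
    ultimately show ?thesis using posi[OF that(1,2)] iph[OF that(1,2)] by linarith
  qed
  have DD0: "DD ?d 0 = 0" by (simp add: DD_def)
  have pos: "\<forall>x\<le>S+2. 0 \<le> DD ?d x"
  proof (intro allI impI)
    fix x assume "x \<le> S + 2"
    then consider "x = 0" | "1 \<le> x \<and> x \<le> S" | "x = Suc S" | "x = Suc (Suc S)" by linarith
    then show "0 \<le> DD ?d x" using posi DD0 b1 b2' by cases auto
  qed
  have terms: "\<forall>x\<in>{1..<Suc S}. 0 \<le> DD ?d x * D2 g x"
  proof
    fix x assume x: "x \<in> {1..<Suc S}"
    show "0 \<le> DD ?d x * D2 g x"
    proof (cases "x \<in> P")
      case True then show ?thesis using knot0 x by auto
    next
      case False then show ?thesis using g x posi unfolding C_def by auto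
    qed
  qed
  have "(\<Sum>x\<in>{1..<Suc S}. DD ?d x * D2 g x) = 0"
    using nec2[OF g min] by (simp add: ip_sbp b1 b2')
  hence each: "\<forall>x\<in>{1..<Suc S}. DD ?d x * D2 g x = 0"
    using terms sum_nonneg_eq_0_iff[of "{1..<Suc S}" "\<lambda>x. DD ?d x * D2 g x"] by blast
  have "\<forall>x\<le>S+2. (x \<in> P \<or> x = S+2 \<or> (1 \<le> x \<and> x \<le> S \<and> 0 < D2 g x \<and> x \<notin> P))
             \<longrightarrow> DD ?d x = 0"
  proof (intro allI impI)
    fix x assume x: "x \<le> S + 2" and c: "x \<in> P \<or> x = S+2 \<or> (1 \<le> x \<and> x \<le> S \<and> 0 < D2 g x \<and> x \<notin> P)"
    consider "x = 0" | "1 \<le> x \<and> x \<le> S" | "x = Suc S" | "x = Suc (Suc S)" using x by linarith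
    then show "DD ?d x = 0"
    proof cases
      case 2
      show ?thesis
      proof (cases "x \<in> P")
        case True then show ?thesis using knot0 2 by auto
      next
        case False then have "0 < D2 g x" using c 2 by auto
        moreover have "DD ?d x * D2 g x = 0" using each 2 by auto
        ultimately show ?thesis by simp
      qed
    qed (use DD0 b1 b2' in auto)
  qed
  with pos show ?thesis by blast
qed

lemma uniq:
  assumes g1: "g1 \<in> C" "\<forall>h\<in>C. F g1 \<le> F h" and g2: "g2 \<in> C" "\<forall>h\<in>C. F g2 \<le> F h"
  shows "g1 = g2"
proof -
  have "0 \<le> ip (\<lambda>k. g1 k - W k) g2" using nec1[OF g1 g2(1)] .
  moreover have "ip (\<lambda>k. g1 k - W k) g1 = 0" using nec2[OF g1] .
  moreover have "F g2 \<le> F g1" using g2 g1 by auto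
  ultimately have "(\<Sum>k\<le>Suc S. (g2 k - g1 k)^2) \<le> 0" using F_diff[of g2 g1] by linarith
  hence sq: "(\<Sum>k\<le>Suc S. (g2 k - g1 k)^2) = 0" by (rule antisym[OF _ sum_nonneg]) simp
  hence all0: "\<forall>k\<in>{..Suc S}. (g2 k - g1 k)^2 = 0"
    by (metis (no_types, lifting) finite_atMost sum_nonneg_eq_0_iff zero_le_power2)
  have out: "\<forall>k>Suc S. g1 k = 0 \<and> g2 k = 0" using g1 g2 unfolding C_def by auto
  show ?thesis
  proof (rule ext)
    fix k show "g1 k = g2 k"
    proof (cases "k \<le> Suc S")
      case True then have "(g2 k - g1 k)^2 = 0" using all0 by auto
      then show ?thesis by simp
    next
      case False then show ?thesis using out by auto
    qed
  qed
qed

end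



context cvx begin

lemma cont_coord: "continuous_on UNIV (\<lambda>g::nat \<Rightarrow> real. g k)"
  by simp

lemma cont_D2: "continuous_on UNIV (\<lambda>g. D2 g x)"
  unfolding D2_def by (intro continuous_intros cont_coord)

lemma cont_F: "continuous_on A F"
proof -
  have "continuous_on UNIV F"
    unfolding F_def[abs_def] by (intro continuous_intros cont_coord)
  thus ?thesis by (rule continuous_on_subset) auto
qed

lemma closed_C: "closed C"
proof -
  have "C = (\<Inter>k\<in>{Suc S<..}. {g. g k = 0}) \<inter> (\<Inter>x\<in>{x. 1 \<le> x \<and> x \<le> S \<and> x \<notin> P}. {g. 0 \<le> D2 g x})"
    unfolding C_def by auto
  moreover have "closed \<dots>"
    by (intro closed_Int closed_INT ballI closed_Collect_eq closed_Collect_le cont_coord cont_D2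
        continuous_on_const)
  ultimately show ?thesis by simp
qed

lemma compact_box: "compact (PiE UNIV (\<lambda>k. if k \<le> Suc S then {-R..R} else {0::real}))"
proof -
  have "compactin (product_topology (\<lambda>_. euclidean) UNIV)
     (PiE UNIV (\<lambda>k. if k \<le> Suc S then {-R..R} else {0::real}))"
    by (subst compactin_PiE) auto
  thus ?thesis by (simp add: euclidean_product_topology)
qed

lemma abs_le_sq: "\<bar>x::real\<bar> \<le> 1 + x^2"
proof (cases "\<bar>x\<bar> \<le> 1")
  case True then show ?thesis by (smt (verit) zero_le_power2)
next
  case False
  then have "\<bar>x\<bar> * 1 \<le> \<bar>x\<bar> * \<bar>x\<bar>" by (intro mult_left_mono) auto
  also have "\<dots> = x^2" by (simp add: power2_eq_square abs_mult_self_eq)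
  finally show ?thesis by simp
qed

lemma F_nonneg: "0 \<le> F g"
  by (simp add: F_def sum_nonneg)

lemma exists: "\<exists>g\<in>C. \<forall>h\<in>C. F g \<le> F h"
proof -
  define z :: "nat \<Rightarrow> real" where "z = (\<lambda>_. 0)"
  define R where "R = (\<Sum>k\<le>Suc S. \<bar>W k\<bar>) + 1 + 2 * F z"
  define B where "B = PiE UNIV (\<lambda>k. if k \<le> Suc S then {-R..R} else {0::real})"
  have R0: "0 \<le> R" unfolding R_def using F_nonneg[of z] by (simp add: sum_nonneg)
  have zC: "z \<in> C" unfolding C_def z_def by (simp add: D2_def)
  have zB: "z \<in> B" unfolding B_def z_def using R0 by (simp add: PiE_iff)
  have "compact (B \<inter> C)" unfolding B_def using compact_box closed_C by (rule compact_Int_closed)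
  moreover have "B \<inter> C \<noteq> {}" using zB zC by blast
  ultimately obtain g where g: "g \<in> B \<inter> C" and gmin: "\<forall>y\<in>B \<inter> C. F g \<le> F y"
    using continuous_attains_inf[of "B \<inter> C" F, OF _ _ cont_F] by blast
  have inB: "h \<in> B" if h: "h \<in> C" and Fh: "F h \<le> F z" for h
  proof -
    have "-R \<le> h k \<and> h k \<le> R" if k: "k \<le> Suc S" for k
    proof -
      have "(h k - W k)^2 \<le> (\<Sum>k\<le>Suc S. (h k - W k)^2)"
        using k by (intro member_le_sum) auto
      also have "\<dots> = 2 * F h" by (simp add: F_def)
      finally have sq: "(h k - W k)^2 \<le> 2 * F z" using Fh by linarith
      have "\<bar>h k - W k\<bar> \<le> 1 + (h k - W k)^2" by (rule abs_le_sq)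
      moreover have "\<bar>W k\<bar> \<le> (\<Sum>k\<le>Suc S. \<bar>W k\<bar>)"
        using k by (intro member_le_sum) auto
      ultimately have "\<bar>h k\<bar> \<le> R" unfolding R_def using sq by linarith
      thus ?thesis by (simp add: abs_le_iff)
    qed
    moreover have "\<forall>k>Suc S. h k = 0" using h unfolding C_def by auto
    ultimately show ?thesis unfolding B_def by (auto simp: PiE_iff)
  qed
  have "\<forall>h\<in>C. F g \<le> F h"
  proof
    fix h assume h: "h \<in> C"
    show "F g \<le> F h"
    proof (cases "F h \<le> F z")
      case True then show ?thesis using gmin inB[OF h True] h by blast
    next
      case False
      have "F g \<le> F z" using gmin zB zC by blast
      then show ?thesis using False by linarith
    qed
  qed
  with g show ?thesis by blast
qed

end



lemma btw_iff:
  fixes s :: "nat list" and N :: nat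
  assumes srt: "sorted s" and dst: "distinct s" and z: "0 \<in> set s" and n: "Suc N \<in> set s"
    and sub: "set s \<subseteq> {..Suc N}"
  shows "(\<exists>j<length s - 1. s!j < x \<and> x < s!(j+1)) \<longleftrightarrow> 1 \<le> x \<and> x \<le> N \<and> x \<notin> set s"
proof
  assume "\<exists>j<length s - 1. s!j < x \<and> x < s!(j+1)"
  then obtain j where j: "j < length s - 1" "s!j < x" "x < s!(j+1)" by blast
  have "s!(j+1) \<in> set s" using j(1) by simp
  hence "x \<le> N" using sub j(3) by auto
  moreover have "x \<notin> set s"
  proof
    assume "x \<in> set s"
    then obtain i where i: "i < length s" "s!i = x" by (metis in_set_conv_nth)
    have jl: "j < length s" "j + 1 < length s" using j(1) by auto
    have "\<not> i \<le> j" using sorted_nth_mono[OF srt, of i j] j i jl by auto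
    moreover have "\<not> j + 1 \<le> i" using sorted_nth_mono[OF srt, of "j+1" i] j i jl by auto
    ultimately show False by linarith
  qed
  ultimately show "1 \<le> x \<and> x \<le> N \<and> x \<notin> set s" using j(2) by auto
next
  assume x: "1 \<le> x \<and> x \<le> N \<and> x \<notin> set s"
  have ne: "s \<noteq> []" using z by auto
  obtain i where i: "i < length s" "s!i = 0" using z by (metis in_set_conv_nth)
  have "hd s = s!0" using ne by (simp add: hd_conv_nth)
  also have "\<dots> \<le> s!i" using sorted_nth_mono[OF srt, of 0 i] i by simp
  finally have h: "hd s < x" using i x by simp
  obtain i' where i': "i' < length s" "s!i' = Suc N" using n by (metis in_set_conv_nth)
  have "Suc N \<le> s!(length s - 1)" using sorted_nth_mono[OF srt, of i' "length s - 1"] i' by simp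
  also have "\<dots> = last s" using ne by (simp add: last_conv_nth)
  finally have l: "x < last s" using x by simp
  show "\<exists>j<length s - 1. s!j < x \<and> x < s!(j+1)" using list_gap[OF ne h l] x by blast
qed

lemma cum_W:
  assumes "U 0 = 0"
  shows "(\<Sum>j\<le>k. Wproc U p j) = U (cdf p k)"
  using assms by (induction k) (auto simp: Wproc_def)

theorem theorem2:
  fixes p0 :: "nat \<Rightarrow> real" and S :: nat and U :: "real \<Rightarrow> real"
  assumes "1 \<le> S"
    and "convex_pmf_support p0 S"
    and "continuous_on {0..1} U" and "U 0 = 0" and "U 1 = 0"
  shows "(\<exists>!g. g \<in> CK p0 S \<and> (\<forall>h\<in>CK p0 S. Phi U p0 S g \<le> Phi U p0 S h))
    \<and> (\<forall>g\<in>CK p0 S.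
         (\<forall>h\<in>CK p0 S. Phi U p0 S g \<le> Phi U p0 S h) \<longleftrightarrow>
         ((\<forall>x\<le>S+2. Hproc U p0 x \<le> Hhat g x) \<and>
          (\<forall>x\<le>S+2. (x \<in> set (knot_seq p0 S) \<or> x = S + 2 \<or>
                      (vec_knot g S x \<and>
                       (\<exists>j < length (knot_seq p0 S) - 1.
                          knot_seq p0 S ! j < x \<and> x < knot_seq p0 S ! (j + 1))))
                     \<longrightarrow> Hhat g x = Hproc U p0 x)))"
proof -
  define s where "s = knot_seq p0 S"
  define P where "P = set s"
  define W where "W = Wproc U p0"
  have fin: "finite ({0, S + 1} \<union> interior_knots p0 S)"
    by (rule finite_subset[of _ "{..S+1}"]) (auto simp: interior_knots_def)
  have Pset: "P = {0, S + 1} \<union> interior_knots p0 S"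
    unfolding P_def s_def knot_seq_def by (rule set_sorted_list_of_set[OF fin])
  have srt: "sorted s" and dst: "distinct s" unfolding s_def knot_seq_def
    by (rule sorted_sorted_list_of_set, rule distinct_sorted_list_of_set)
  have z: "0 \<in> set s" and n: "Suc S \<in> set s" using Pset unfolding P_def by auto
  have sub: "set s \<subseteq> {..Suc S}" using Pset unfolding P_def by (auto simp: interior_knots_def)
  note bt = btw_iff[OF srt dst z n sub]
  interpret cvx S P W using n by unfold_locales (simp add: P_def)
  have cv: "(\<forall>j<length s - 1. convex_on_range g (s!j) (s!(j+1))) \<longleftrightarrow>
      (\<forall>x. 1 \<le> x \<and> x \<le> S \<and> x \<notin> P \<longrightarrow> 0 \<le> D2 g x)" for g
  proof -
    have "(\<forall>j<length s - 1. convex_on_range g (s!j) (s!(j+1))) \<longleftrightarrow>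
      (\<forall>x. (\<exists>j<length s - 1. s!j < x \<and> x < s!(j+1)) \<longrightarrow> 0 \<le> D2 g x)"
      unfolding convex_on_range_def by blast
    also have "\<dots> \<longleftrightarrow> (\<forall>x. 1 \<le> x \<and> x \<le> S \<and> x \<notin> P \<longrightarrow> 0 \<le> D2 g x)"
      by (simp only: bt P_def)
    finally show ?thesis .
  qed
  have CKeq: "CK p0 S = C"
    unfolding CK_def C_def Let_def s_def[symmetric] using cv by simp
  have Phieq: "Phi U p0 S = F"
  proof (rule ext)
    fix g show "Phi U p0 S g = F g" unfolding F_def unfolding Phi_def W_def by simp
  qed
  have Hd: "Hhat g x - Hproc U p0 x = DD (\<lambda>k. g k - W k) x" for g x
    unfolding Hhat_def Hproc_def DD_def W_def
    by (simp add: sum_subtractf cum_W[of U, OF assms(4)])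
  show ?thesis
    unfolding CKeq Phieq s_def[symmetric]
  proof (intro conjI ballI)
    show "\<exists>!g. g \<in> C \<and> (\<forall>h\<in>C. F g \<le> F h)" using exists uniq by blast
  next
    fix g assume g: "g \<in> C"
    have e1: "(Hproc U p0 x \<le> Hhat g x) \<longleftrightarrow> 0 \<le> DD (\<lambda>k. g k - W k) x" for x
      using Hd[of g x] by linarith
    have e2: "(Hhat g x = Hproc U p0 x) \<longleftrightarrow> DD (\<lambda>k. g k - W k) x = 0" for x
      using Hd[of g x] by linarith
    have e3: "(x \<in> set s \<or> x = S + 2 \<or> (vec_knot g S x \<and>
               (\<exists>j < length s - 1. s ! j < x \<and> x < s ! (j + 1)))) \<longleftrightarrow>
              (x \<in> P \<or> x = S+2 \<or> (1 \<le> x \<and> x \<le> S \<and> 0 < D2 g x \<and> x \<notin> P))" for x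
      unfolding bt vec_knot_def P_def by auto
    show "(\<forall>h\<in>C. F g \<le> F h) \<longleftrightarrow>
         ((\<forall>x\<le>S+2. Hproc U p0 x \<le> Hhat g x) \<and>
          (\<forall>x\<le>S+2. (x \<in> set s \<or> x = S + 2 \<or> (vec_knot g S x \<and>
               (\<exists>j < length s - 1. s ! j < x \<and> x < s ! (j + 1))))
                     \<longrightarrow> Hhat g x = Hproc U p0 x))"
      unfolding e1 e2 e3 using nec[OF g] suff[OF g] by blast
  qed
qed


end
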